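(* Let $n\ge2$, let $A\in\mathbb R^{n\times n}$ have $A_{i,i+1}=1$ ($i=1,\dots,n-1$) and all other entries $0$, and $b=(0,\dots,0,1)^T$ with entries $b_i$. Let $F_i,\bar F_i,P_i$ ($i=1,\dots,n$) and $Q$ be symmetric $n\times n$ real matrices, $P_{n+1}=0$, $G,\bar G\in\mathbb R^{n\times n}$ with $i$th rows $G_i,\bar G_i$, and $r\in\mathbb R^{1\times n}$, such that for $i=1,\dots,n$ $$\bar F_i = F_i + P_{i+1} - \mathbf LP_i - b_iQ,\qquad \bar G_i = G_i - 2b^TP_i - b_ir.$$ Then $$P_1 = \mathbf X_0^{-1}\Big(\sum_{i=1}^{n-1}\mathbf X_iF_i + \tfrac12 G - \sum_{i=1}^{n-1}\mathbf X_i\bar F_i - \tfrac12\bar G - \tfrac12 br\Big).$$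
   Context: $\mathbf L:\mathbb R^{n\times n}\to\mathbb R^{n\times n}$ is $\mathbf LP=A^TP+PA$, with $\mathbf L^0P=P$, $\mathbf L^{k+1}=\mathbf L\circ\mathbf L^k$. The linear operator $\mathbf X_0:\mathbb R^{n\times n}\to\mathbb R^{n\times n}$ maps $P$ to the matrix whose $k$th row ($k=1,\dots,n$) is the $n$th row of $\mathbf L^{k-1}P$; for $i\ge1$, $\mathbf X_iP=(A^T)^i\mathbf X_0P$. The paper asserts that $\mathbf X_0$ is invertible, and $\mathbf X_0^{-1}$ denotes its inverse. $br$ is the outer product of the column $b$ and the row $r$. *)

theory Defs
  imports "Jordan_Normal_Form.Matrix"
begin

text \<open>All matrices are n x n real matrices of the Jordan_Normal_Form library;
  indices are 0-based, so the paper's row/entry i corresponds to index i-1.\<close>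

definition shiftA :: "nat \<Rightarrow> real mat" where
  "shiftA n = mat n n (\<lambda>(i,j). if j = i + 1 then 1 else 0)"

definition bvec :: "nat \<Rightarrow> real vec" where
  "bvec n = vec n (\<lambda>i. if i = n - 1 then 1 else 0)"

definition Lop :: "real mat \<Rightarrow> real mat \<Rightarrow> real mat" where
  "Lop A P = transpose_mat A * P + P * A"

definition X0op :: "nat \<Rightarrow> real mat \<Rightarrow> real mat \<Rightarrow> real mat" where
  "X0op n A P = mat n n (\<lambda>(k,j). ((Lop A ^^ k) P) $$ (n - 1, j))"

definition Xop :: "nat \<Rightarrow> real mat \<Rightarrow> nat \<Rightarrow> real mat \<Rightarrow> real mat" where
  "Xop n A i P = (transpose_mat A ^\<^sub>m i) * X0op n A P"

definition X0inv :: "nat \<Rightarrow> real mat \<Rightarrow> real mat \<Rightarrow> real mat" where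
  "X0inv n A = the_inv_into (carrier_mat n n) (X0op n A)"

definition msum :: "nat \<Rightarrow> (nat \<Rightarrow> real mat) \<Rightarrow> nat set \<Rightarrow> real mat" where
  "msum n f I = mat n n (\<lambda>(i,j). \<Sum>k\<in>I. f k $$ (i,j))"

definition outer :: "real vec \<Rightarrow> real vec \<Rightarrow> real mat" where
  "outer b r = mat (dim_vec b) (dim_vec r) (\<lambda>(i,j). b $ i * r $ j)"

definition symm_mat :: "nat \<Rightarrow> real mat \<Rightarrow> bool" where
  "symm_mat n M \<longleftrightarrow> M \<in> carrier_mat n n \<and> transpose_mat M = M"

end

theory Submission imports Defs begin

lemma shiftA_carrier[simp]: "shiftA n \<in> carrier_mat n n"
  by (simp add: shiftA_def)

lemma shiftA_dims[simp]: "dim_row (shiftA n) = n" "dim_col (shiftA n) = n"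
  by (simp_all add: shiftA_def)

lemma Lop_dim_row[simp]: "M \<in> carrier_mat n n \<Longrightarrow> dim_row (Lop (shiftA n) M) = n"
  by (simp add: Lop_def)

lemma Lop_dim_col[simp]: "dim_col (Lop (shiftA n) M) = n"
  by (simp add: Lop_def)

lemma Lop_carrier[simp]: "M \<in> carrier_mat n n \<Longrightarrow> Lop (shiftA n) M \<in> carrier_mat n n"
  by (simp add: Lop_def)

lemma Lpow_carrier[simp]: "M \<in> carrier_mat n n \<Longrightarrow> (Lop (shiftA n) ^^ m) M \<in> carrier_mat n n"
  by (induction m) auto

lemma Lpow_dims[simp]: "M \<in> carrier_mat n n \<Longrightarrow> dim_row ((Lop (shiftA n) ^^ m) M) = n"
   "M \<in> carrier_mat n n \<Longrightarrow> dim_col ((Lop (shiftA n) ^^ m) M) = n"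
  by (meson Lpow_carrier carrier_matD)+

lemma sum_shift_aux: "i < n \<Longrightarrow> (\<Sum>l<n. (if i = Suc l then 1 else 0) * (f l::real)) = (if 0 < i then f (i - 1) else 0)"
proof -
  assume i: "i < n"
  have "(\<Sum>l<n. (if i = Suc l then 1 else 0) * f l) = (\<Sum>l<n. if l = i - 1 \<and> 0 < i then f l else 0)"
    by (rule sum.cong) (auto split: if_splits)
  also have "\<dots> = (if 0 < i then f (i - 1) else 0)" using i by (auto simp: sum.If_cases)
  finally show ?thesis .
qed

lemma sum_shift_aux2: "j < n \<Longrightarrow> (\<Sum>l<n. (f l::real) * (if j = Suc l then 1 else 0)) = (if 0 < j then f (j - 1) else 0)"
proof -
  assume i: "j < n"
  have "(\<Sum>l<n. f l * (if j = Suc l then 1 else 0)) = (\<Sum>l<n. if l = j - 1 \<and> 0 < j then f l else 0)"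
    by (rule sum.cong) (auto split: if_splits)
  also have "\<dots> = (if 0 < j then f (j - 1) else 0)" using i by (auto simp: sum.If_cases)
  finally show ?thesis .
qed

lemma T_mult_entry:
  assumes "X \<in> carrier_mat n m" "k < n" "j < m"
  shows "(transpose_mat (shiftA n) * X) $$ (k, j) = (if 0 < k then X $$ (k - 1, j) else 0)"
  using assms
  by (simp add: shiftA_def scalar_prod_def sum_shift_aux flip: lessThan_atLeast0)

lemma mult_A_entry:
  assumes "X \<in> carrier_mat m n" "k < m" "j < n"
  shows "(X * shiftA n) $$ (k, j) = (if 0 < j then X $$ (k, j - 1) else 0)"
  using assms
  by (simp add: shiftA_def scalar_prod_def sum_shift_aux2 flip: lessThan_atLeast0)

lemma Lop_entry:
  assumes "M \<in> carrier_mat n n" "i < n" "j < n"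
  shows "Lop (shiftA n) M $$ (i, j) = (if 0 < i then M $$ (i - 1, j) else 0) + (if 0 < j then M $$ (i, j - 1) else 0)"
  using assms T_mult_entry[OF assms] mult_A_entry[OF assms] unfolding Lop_def
  by (subst index_add_mat) auto


lemma Lop_add:
  assumes X: "X \<in> carrier_mat n n" and Y: "Y \<in> carrier_mat n n"
  shows "Lop (shiftA n) (X + Y) = Lop (shiftA n) X + Lop (shiftA n) Y"
proof -
  have c1: "X + Y \<in> carrier_mat n n" using Y by (rule add_carrier_mat)
  have d: "dim_row (Lop (shiftA n) X + Lop (shiftA n) Y) = n" "dim_col (Lop (shiftA n) X + Lop (shiftA n) Y) = n"
    "dim_row (Lop (shiftA n) (X + Y)) = n" "dim_col (Lop (shiftA n) (X + Y)) = n"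
    using Lop_dim_row[OF Y] Lop_dim_row[OF c1] Lop_dim_col by (simp_all only: index_add_mat)
  show ?thesis
  proof (rule eq_matI)
    fix i j assume "i < dim_row (Lop (shiftA n) X + Lop (shiftA n) Y)" "j < dim_col (Lop (shiftA n) X + Lop (shiftA n) Y)"
    then have ij: "i < n" "j < n" unfolding d by simp_all
    have e: "(Lop (shiftA n) X + Lop (shiftA n) Y) $$ (i, j) = Lop (shiftA n) X $$ (i, j) + Lop (shiftA n) Y $$ (i, j)"
      by (rule index_add_mat(1)) (simp_all only: Lop_dim_row[OF Y] Lop_dim_col ij)
    have e1: "(X + Y) $$ (i - 1, j) = X $$ (i - 1, j) + Y $$ (i - 1, j)" if "0 < i"
      by (rule index_add_mat(1)) (use Y ij in \<open>simp_all add: carrier_matD\<close>)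
    have e2: "(X + Y) $$ (i, j - 1) = X $$ (i, j - 1) + Y $$ (i, j - 1)" if "0 < j"
      by (rule index_add_mat(1)) (use Y ij in \<open>simp_all add: carrier_matD\<close>)
    show "Lop (shiftA n) (X + Y) $$ (i, j) = (Lop (shiftA n) X + Lop (shiftA n) Y) $$ (i, j)"
      unfolding e Lop_entry[OF c1 ij] Lop_entry[OF X ij] Lop_entry[OF Y ij]
      using e1 e2 by (cases "0 < i"; cases "0 < j") simp_all
  qed (simp_all only: d)
qed

lemma Lop_minus:
  assumes X: "X \<in> carrier_mat n n" and Y: "Y \<in> carrier_mat n n"
  shows "Lop (shiftA n) (X - Y) = Lop (shiftA n) X - Lop (shiftA n) Y"
proof -
  have c1: "X - Y \<in> carrier_mat n n" using Y by (rule minus_carrier_mat)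
  have d: "dim_row (Lop (shiftA n) X - Lop (shiftA n) Y) = n" "dim_col (Lop (shiftA n) X - Lop (shiftA n) Y) = n"
    "dim_row (Lop (shiftA n) (X - Y)) = n" "dim_col (Lop (shiftA n) (X - Y)) = n"
    using Lop_dim_row[OF Y] Lop_dim_row[OF c1] Lop_dim_col by (simp_all only: index_minus_mat)
  show ?thesis
  proof (rule eq_matI)
    fix i j assume "i < dim_row (Lop (shiftA n) X - Lop (shiftA n) Y)" "j < dim_col (Lop (shiftA n) X - Lop (shiftA n) Y)"
    then have ij: "i < n" "j < n" unfolding d by simp_all
    have e: "(Lop (shiftA n) X - Lop (shiftA n) Y) $$ (i, j) = Lop (shiftA n) X $$ (i, j) - Lop (shiftA n) Y $$ (i, j)"
      by (rule index_minus_mat(1)) (simp_all only: Lop_dim_row[OF Y] Lop_dim_col ij)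
    have e1: "(X - Y) $$ (i - 1, j) = X $$ (i - 1, j) - Y $$ (i - 1, j)" if "0 < i"
      by (rule index_minus_mat(1)) (use Y ij in \<open>simp_all add: carrier_matD\<close>)
    have e2: "(X - Y) $$ (i, j - 1) = X $$ (i, j - 1) - Y $$ (i, j - 1)" if "0 < j"
      by (rule index_minus_mat(1)) (use Y ij in \<open>simp_all add: carrier_matD\<close>)
    show "Lop (shiftA n) (X - Y) $$ (i, j) = (Lop (shiftA n) X - Lop (shiftA n) Y) $$ (i, j)"
      unfolding e Lop_entry[OF c1 ij] Lop_entry[OF X ij] Lop_entry[OF Y ij]
      using e1 e2 by (cases "0 < i"; cases "0 < j") simp_all
  qed (simp_all only: d)
qed

lemma Lpow_add:
  assumes "X \<in> carrier_mat n n" "Y \<in> carrier_mat n n"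
  shows "(Lop (shiftA n) ^^ m) (X + Y) = (Lop (shiftA n) ^^ m) X + (Lop (shiftA n) ^^ m) Y"
  by (induction m) (use assms in \<open>auto simp: Lop_add\<close>)

lemma Lpow_minus:
  assumes "X \<in> carrier_mat n n" "Y \<in> carrier_mat n n"
  shows "(Lop (shiftA n) ^^ m) (X - Y) = (Lop (shiftA n) ^^ m) X - (Lop (shiftA n) ^^ m) Y"
  by (induction m) (use assms in \<open>auto simp: Lop_minus\<close>)

lemma Tpow_entry:
  "X \<in> carrier_mat n m \<Longrightarrow> k < n \<Longrightarrow> j < m \<Longrightarrow>
   (transpose_mat (shiftA n) ^\<^sub>m i * X) $$ (k, j) = (if i \<le> k then X $$ (k - i, j) else 0)"
proof (induction i arbitrary: X k)
  case 0
  then show ?case by simp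
next
  case (Suc i)
  have T: "transpose_mat (shiftA n) \<in> carrier_mat n n" by simp
  have Ti: "transpose_mat (shiftA n) ^\<^sub>m i \<in> carrier_mat n n" by (rule pow_carrier_mat[OF T])
  have TX: "transpose_mat (shiftA n) * X \<in> carrier_mat n m" using Suc.prems(1) T by (rule mult_carrier_mat[rotated])
  have "transpose_mat (shiftA n) ^\<^sub>m Suc i * X = transpose_mat (shiftA n) ^\<^sub>m i * (transpose_mat (shiftA n) * X)"
    using assoc_mult_mat[OF Ti T Suc.prems(1)] by simp
  also have "\<dots> $$ (k, j) = (if i \<le> k then (transpose_mat (shiftA n) * X) $$ (k - i, j) else 0)"
    using Suc.IH[OF TX Suc.prems(2,3)] .
  also have "\<dots> = (if Suc i \<le> k then X $$ (k - Suc i, j) else 0)"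
    using T_mult_entry[OF Suc.prems(1) _ Suc.prems(3)] Suc.prems by auto
  finally show ?case .
qed

lemma X0op_carrier[simp]: "X0op n A P \<in> carrier_mat n n"
  by (simp add: X0op_def)

lemma Xop_entry:
  assumes "M \<in> carrier_mat n n" "k < n" "j < n"
  shows "Xop n (shiftA n) i M $$ (k, j) = (if i \<le> k then ((Lop (shiftA n) ^^ (k - i)) M) $$ (n - 1, j) else 0)"
  unfolding Xop_def using Tpow_entry[OF X0op_carrier assms(2,3)] assms by (auto simp: X0op_def)

lemma Xop_carrier[simp]: "Xop n (shiftA n) i M \<in> carrier_mat n n"
  unfolding Xop_def by (rule mult_carrier_mat[OF pow_carrier_mat]) auto

lemma msum_carrier[simp]: "msum n f I \<in> carrier_mat n n"
  by (simp add: msum_def)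

lemma shift_zero:
  assumes D: "D \<in> carrier_mat n n" and sn: "s + m < n"
    and z: "\<forall>i j. s < i \<and> i < n \<and> j < n \<longrightarrow> D $$ (i, j) = 0"
  shows "(\<forall>i j. s + m < i \<and> i < n \<and> j < n \<longrightarrow> ((Lop (shiftA n) ^^ m) D) $$ (i, j) = 0)
    \<and> (\<forall>j<n. ((Lop (shiftA n) ^^ m) D) $$ (s + m, j) = D $$ (s, j))"
  using sn
proof (induction m)
  case 0
  then show ?case using z by simp
next
  case (Suc m)
  then have IH1: "\<forall>i j. s + m < i \<and> i < n \<and> j < n \<longrightarrow> ((Lop (shiftA n) ^^ m) D) $$ (i, j) = 0"
    and IH2: "\<forall>j<n. ((Lop (shiftA n) ^^ m) D) $$ (s + m, j) = D $$ (s, j)" by auto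
  have C: "(Lop (shiftA n) ^^ m) D \<in> carrier_mat n n" using D by simp
  show ?case
  proof (intro conjI allI impI)
    fix i j assume a: "s + Suc m < i \<and> i < n \<and> j < n"
    then show "(Lop (shiftA n) ^^ Suc m) D $$ (i, j) = 0"
    proof -
      have "s + m < i - 1" "i - 1 < n" "s + m < i" "j - 1 < n" using a by auto
      then have "((Lop (shiftA n) ^^ m) D) $$ (i - 1, j) = 0" "((Lop (shiftA n) ^^ m) D) $$ (i, j - 1) = 0"
        using IH1 a by auto
      then show ?thesis using Lop_entry[OF C, of i j] a by auto
    qed
  next
    fix j assume a: "j < n"
    then show "(Lop (shiftA n) ^^ Suc m) D $$ (s + Suc m, j) = D $$ (s, j)"
    proof -
      have lt: "s + Suc m < n" "s + m < n" using Suc.prems by simp_all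
      have z1: "((Lop (shiftA n) ^^ m) D) $$ (s + Suc m, j - 1) = 0"
        using IH1 lt a by simp
      have z2: "((Lop (shiftA n) ^^ m) D) $$ (s + m, j) = D $$ (s, j)"
        using IH2 a by simp
      show ?thesis using Lop_entry[OF C lt(1) a] z1 z2 by simp
    qed
  qed
qed

lemma zero_from_rows:
  assumes D: "D \<in> carrier_mat n n"
    and h: "\<forall>k<n. \<forall>j<n. ((Lop (shiftA n) ^^ k) D) $$ (n - 1, j) = 0"
  shows "t \<le> n \<Longrightarrow> \<forall>i j. n - t \<le> i \<and> i < n \<and> j < n \<longrightarrow> D $$ (i, j) = 0"
proof (induction t)
  case 0
  then show ?case by simp
next
  case (Suc t)
  define s where "s = n - Suc t"
  have tn: "t \<le> n" "t < n" using Suc.prems by simp_all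
  have IH: "\<forall>i j. n - t \<le> i \<and> i < n \<and> j < n \<longrightarrow> D $$ (i, j) = 0" using Suc.IH[OF tn(1)] .
  have z: "\<forall>i j. s < i \<and> i < n \<and> j < n \<longrightarrow> D $$ (i, j) = 0"
  proof (intro allI impI)
    fix i j assume a: "s < i \<and> i < n \<and> j < n"
    then have "n - t \<le> i" using s_def tn by linarith
    then show "D $$ (i, j) = 0" using IH a by blast
  qed
  have st: "s + t < n" "s + t = n - 1" using tn s_def by linarith+
  have Ds: "D $$ (s, j) = 0" if j: "j < n" for j
  proof -
    have "((Lop (shiftA n) ^^ t) D) $$ (s + t, j) = D $$ (s, j)" using shift_zero[OF D st(1) z] j by blast
    moreover have "((Lop (shiftA n) ^^ t) D) $$ (n - 1, j) = 0" using h j Suc.prems by auto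
    ultimately show ?thesis using st(2) by simp
  qed
  show ?case
  proof (intro allI impI)
    fix i j assume a: "n - Suc t \<le> i \<and> i < n \<and> j < n"
    show "D $$ (i, j) = 0"
    proof (cases "i = s")
      case True
      then show ?thesis using Ds a by simp
    next
      case False
      then have "s < i" using a s_def by simp
      then show ?thesis using z a by blast
    qed
  qed
qed

lemma X0_inj: "inj_on (X0op n (shiftA n)) (carrier_mat n n)"
proof (rule inj_onI)
  fix P P' assume P: "P \<in> carrier_mat n n" and P': "P' \<in> carrier_mat n n"
    and e: "X0op n (shiftA n) P = X0op n (shiftA n) P'"
  define D where "D = P - P'"
  have D: "D \<in> carrier_mat n n" using P' D_def by (simp add: minus_carrier_mat)
  have h: "\<forall>k<n. \<forall>j<n. ((Lop (shiftA n) ^^ k) D) $$ (n - 1, j) = 0"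
  proof (intro allI impI)
    fix k j assume k: "k < n" and j: "j < n"
    have "X0op n (shiftA n) P $$ (k, j) = X0op n (shiftA n) P' $$ (k, j)" using e by simp
    then have eq: "((Lop (shiftA n) ^^ k) P) $$ (n - 1, j) = ((Lop (shiftA n) ^^ k) P') $$ (n - 1, j)"
      using k j by (simp add: X0op_def)
    have n1: "n - 1 < n" using k by simp
    show "((Lop (shiftA n) ^^ k) D) $$ (n - 1, j) = 0"
    proof -
      have "((Lop (shiftA n) ^^ k) D) $$ (n - 1, j) = ((Lop (shiftA n) ^^ k) P - (Lop (shiftA n) ^^ k) P') $$ (n - 1, j)"
        unfolding D_def using Lpow_minus[OF P P', of k] by simp
      also have "\<dots> = ((Lop (shiftA n) ^^ k) P) $$ (n - 1, j) - ((Lop (shiftA n) ^^ k) P') $$ (n - 1, j)"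
        using P' j n1 by simp
      finally show ?thesis using eq by simp
    qed
  qed
  have "\<forall>i j. n - n \<le> i \<and> i < n \<and> j < n \<longrightarrow> D $$ (i, j) = 0"
    using zero_from_rows[OF D h, of n] by simp
  then have Z: "D $$ (i, j) = 0" if "i < n" "j < n" for i j using that by simp
  show "P = P'"
  proof (rule eq_matI)
    fix i j assume "i < dim_row P'" "j < dim_col P'"
    then have ij: "i < n" "j < n" using P' by auto
    have "D $$ (i, j) = P $$ (i, j) - P' $$ (i, j)" unfolding D_def using ij P' by simp
    then show "P $$ (i, j) = P' $$ (i, j)" using Z[OF ij] by simp
  qed (use P P' in simp_all)
qed

lemma tele:
  fixes g :: "nat \<Rightarrow> real"
  assumes "k \<le> n - 1"
  shows "(\<Sum>i\<in>{1..n-1}. if i \<le> k then g i - g (Suc i) else 0) = g 1 - g (Suc k)"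
proof -
  have "(\<Sum>i\<in>{1..n-1}. if i \<le> k then g i - g (Suc i) else 0) = (\<Sum>i\<in>{1..n-1} \<inter> {i. i \<le> k}. g i - g (Suc i))"
    by (simp add: sum.inter_restrict)
  also have "{1..n-1} \<inter> {i. i \<le> k} = {1..k}" using assms by auto
  also have "(\<Sum>i\<in>{1..k}. g i - g (Suc i)) = - (\<Sum>i\<in>{1..k}. g (Suc i) - g i)"
    by (simp add: sum_negf[symmetric])
  also have "\<dots> = g 1 - g (Suc k)" by (subst sum_Suc_diff) auto
  finally show ?thesis .
qed

lemma bvec_dim[simp]: "dim_vec (bvec n) = n" by (simp add: bvec_def)

lemma PTb_entry:
  assumes "M \<in> carrier_mat n n" "j < n"
  shows "(transpose_mat M *\<^sub>v bvec n) $ j = M $$ (n - 1, j)"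
proof -
  have "(transpose_mat M *\<^sub>v bvec n) $ j = (\<Sum>l\<in>{0..<n}. M $$ (l, j) * (if l = n - 1 then 1 else 0))"
    using assms by (simp add: scalar_prod_def bvec_def)
  also have "\<dots> = (\<Sum>l\<in>{0..<n}. if l = n - 1 then M $$ (l, j) else 0)"
    by (rule sum.cong) auto
  also have "\<dots> = M $$ (n - 1, j)" using assms by (simp add: sum.delta')
  finally show ?thesis .
qed

theorem theorem3p6:
  fixes n :: nat
    and F Fb P :: "nat \<Rightarrow> real mat"
    and Q G Gb :: "real mat"
    and r :: "real vec"
  assumes n2: "n \<ge> 2"
    and symF: "\<forall>i\<in>{1..n}. symm_mat n (F i)"
    and symFb: "\<forall>i\<in>{1..n}. symm_mat n (Fb i)"
    and symP: "\<forall>i\<in>{1..n}. symm_mat n (P i)"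
    and symQ: "symm_mat n Q"
    and Pn1: "P (n + 1) = 0\<^sub>m n n"
    and G: "G \<in> carrier_mat n n"
    and Gb: "Gb \<in> carrier_mat n n"
    and r: "r \<in> carrier_vec n"
    and eqF: "\<forall>i\<in>{1..n}. Fb i = F i + P (i + 1) - Lop (shiftA n) (P i)
                                 - (bvec n $ (i - 1)) \<cdot>\<^sub>m Q"
    and eqG: "\<forall>i\<in>{1..n}. row Gb (i - 1) = row G (i - 1)
                 - 2 \<cdot>\<^sub>v (transpose_mat (P i) *\<^sub>v bvec n) - (bvec n $ (i - 1)) \<cdot>\<^sub>v r"
  shows "P 1 = X0inv n (shiftA n)
            (msum n (\<lambda>i. Xop n (shiftA n) i (F i)) {1..n-1} + (1/2) \<cdot>\<^sub>m G
             - msum n (\<lambda>i. Xop n (shiftA n) i (Fb i)) {1..n-1} - (1/2) \<cdot>\<^sub>m Gb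
             - (1/2) \<cdot>\<^sub>m outer (bvec n) r)"
proof -
  let ?L = "Lop (shiftA n)"
  have Pc: "\<And>i. i \<in> {1..n} \<Longrightarrow> P i \<in> carrier_mat n n" using symP by (simp add: symm_mat_def)
  have Fc: "\<And>i. i \<in> {1..n} \<Longrightarrow> F i \<in> carrier_mat n n" using symF by (simp add: symm_mat_def)
  have Fbc: "\<And>i. i \<in> {1..n} \<Longrightarrow> Fb i \<in> carrier_mat n n" using symFb by (simp add: symm_mat_def)
  have Qc: "Q \<in> carrier_mat n n" using symQ by (simp add: symm_mat_def)
  have P1c: "P 1 \<in> carrier_mat n n" using Pc n2 by auto
  have oc: "outer (bvec n) r \<in> carrier_mat n n" using r by (simp add: outer_def)
  have Fdiff: "F i - Fb i = ?L (P i) - P (i + 1)" if i: "i \<in> {1..n-1}" for i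
  proof -
    have i1: "i \<in> {1..n}" "i + 1 \<in> {1..n}" using i n2 by auto
    have b0: "bvec n $ (i - 1) = 0" using i n2 by (auto simp: bvec_def)
    note c = Pc[OF i1(1)] Pc[OF i1(2)] Fc[OF i1(1)] Fbc[OF i1(1)] Qc
    have Fbe: "Fb i = F i + P (i + 1) - ?L (P i) - 0 \<cdot>\<^sub>m Q" using eqF i1 b0 by auto
    show ?thesis
    proof (rule eq_matI)
      fix a c assume "a < dim_row (?L (P i) - P (i + 1))" "c < dim_col (?L (P i) - P (i + 1))"
      then have ac: "a < n" "c < n" using c by auto
      show "(F i - Fb i) $$ (a, c) = (?L (P i) - P (i + 1)) $$ (a, c)"
        using ac c unfolding Fbe by simp
    qed (use c in \<open>auto simp: Fbe\<close>)
  qed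
  have Xdiff: "Xop n (shiftA n) i (F i) $$ (k, j) - Xop n (shiftA n) i (Fb i) $$ (k, j)
      = (if i \<le> k then ((?L ^^ (k + 1 - i)) (P i)) $$ (n - 1, j) - ((?L ^^ (k + 1 - Suc i)) (P (Suc i))) $$ (n - 1, j) else 0)"
    if i: "i \<in> {1..n-1}" and kj: "k < n" "j < n" for i k j
  proof -
    have i1: "i \<in> {1..n}" "i + 1 \<in> {1..n}" using i n2 by auto
    note c = Pc[OF i1(1)] Pc[OF i1(2)] Fc[OF i1(1)] Fbc[OF i1(1)]
    have n1: "n - 1 < n" using n2 by auto
    show ?thesis
    proof (cases "i \<le> k")
      case True
      have "Xop n (shiftA n) i (F i) $$ (k, j) - Xop n (shiftA n) i (Fb i) $$ (k, j)
          = ((?L ^^ (k - i)) (F i)) $$ (n - 1, j) - ((?L ^^ (k - i)) (Fb i)) $$ (n - 1, j)"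
        using Xop_entry[OF c(3) kj] Xop_entry[OF c(4) kj] True by simp
      also have "\<dots> = ((?L ^^ (k - i)) (F i) - (?L ^^ (k - i)) (Fb i)) $$ (n - 1, j)"
        using c n1 kj by simp
      also have "(?L ^^ (k - i)) (F i) - (?L ^^ (k - i)) (Fb i) = (?L ^^ (k - i)) (F i - Fb i)"
        using Lpow_minus[OF c(3,4)] by simp
      also have "\<dots> = (?L ^^ (k - i)) (?L (P i)) - (?L ^^ (k - i)) (P (i + 1))"
        unfolding Fdiff[OF i] using Lpow_minus[OF Lop_carrier[OF c(1)] c(2)] by simp
      also have "(?L ^^ (k - i)) (?L (P i)) = (?L ^^ (k + 1 - i)) (P i)"
        using True by (simp add: Suc_diff_le funpow_Suc_right del: funpow.simps)
      finally show ?thesis using True c n1 kj by simp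
    next
      case False
      then show ?thesis using Xop_entry[OF c(3) kj] Xop_entry[OF c(4) kj] by simp
    qed
  qed
  have Gent: "Gb $$ (k, j) = G $$ (k, j) - 2 * P (k + 1) $$ (n - 1, j) - bvec n $ k * r $ j"
    if kj: "k < n" "j < n" for k j
  proof -
    have k1: "k + 1 \<in> {1..n}" using kj by auto
    have e: "row Gb k = row G k - 2 \<cdot>\<^sub>v (transpose_mat (P (k + 1)) *\<^sub>v bvec n) - (bvec n $ k) \<cdot>\<^sub>v r"
      using eqG[rule_format, OF k1] by simp
    have "Gb $$ (k, j) = row Gb k $ j" using Gb kj by simp
    also have "\<dots> = G $$ (k, j) - 2 * (transpose_mat (P (k + 1)) *\<^sub>v bvec n) $ j - bvec n $ k * r $ j"
      unfolding e using G r kj Pc[OF k1] by simp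
    finally show ?thesis using PTb_entry[OF Pc[OF k1] kj(2)] by simp
  qed
  have key: "msum n (\<lambda>i. Xop n (shiftA n) i (F i)) {1..n-1} + (1/2) \<cdot>\<^sub>m G
             - msum n (\<lambda>i. Xop n (shiftA n) i (Fb i)) {1..n-1} - (1/2) \<cdot>\<^sub>m Gb
             - (1/2) \<cdot>\<^sub>m outer (bvec n) r = X0op n (shiftA n) (P 1)"
  proof (rule eq_matI)
    fix k j assume "k < dim_row (X0op n (shiftA n) (P 1))" "j < dim_col (X0op n (shiftA n) (P 1))"
    then have kj: "k < n" "j < n" by (simp_all add: X0op_def)
    define g where "g i = ((?L ^^ (k + 1 - i)) (P i)) $$ (n - 1, j)" for i
    have lhs: "(msum n (\<lambda>i. Xop n (shiftA n) i (F i)) {1..n-1} + (1/2) \<cdot>\<^sub>m G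
             - msum n (\<lambda>i. Xop n (shiftA n) i (Fb i)) {1..n-1} - (1/2) \<cdot>\<^sub>m Gb
             - (1/2) \<cdot>\<^sub>m outer (bvec n) r) $$ (k, j)
       = (\<Sum>i\<in>{1..n-1}. Xop n (shiftA n) i (F i) $$ (k, j)) + 1/2 * G $$ (k, j)
         - (\<Sum>i\<in>{1..n-1}. Xop n (shiftA n) i (Fb i) $$ (k, j)) - 1/2 * Gb $$ (k, j)
         - 1/2 * (bvec n $ k * r $ j)"
      using kj G Gb r by (simp add: msum_def outer_def)
    have "(\<Sum>i\<in>{1..n-1}. Xop n (shiftA n) i (F i) $$ (k, j)) - (\<Sum>i\<in>{1..n-1}. Xop n (shiftA n) i (Fb i) $$ (k, j))
        = (\<Sum>i\<in>{1..n-1}. Xop n (shiftA n) i (F i) $$ (k, j) - Xop n (shiftA n) i (Fb i) $$ (k, j))"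
      by (simp add: sum_subtractf)
    also have "\<dots> = (\<Sum>i\<in>{1..n-1}. if i \<le> k then g i - g (Suc i) else 0)"
      by (rule sum.cong) (use Xdiff kj in \<open>auto simp: g_def\<close>)
    also have "\<dots> = g 1 - g (Suc k)" by (rule tele) (use kj in auto)
    finally have S: "(\<Sum>i\<in>{1..n-1}. Xop n (shiftA n) i (F i) $$ (k, j)) - (\<Sum>i\<in>{1..n-1}. Xop n (shiftA n) i (Fb i) $$ (k, j))
        = g 1 - g (Suc k)" .
    have g1: "g 1 = X0op n (shiftA n) (P 1) $$ (k, j)" using kj by (simp add: g_def X0op_def)
    have gk: "g (Suc k) = P (k + 1) $$ (n - 1, j)" by (simp add: g_def)
    show "(msum n (\<lambda>i. Xop n (shiftA n) i (F i)) {1..n-1} + (1/2) \<cdot>\<^sub>m G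
             - msum n (\<lambda>i. Xop n (shiftA n) i (Fb i)) {1..n-1} - (1/2) \<cdot>\<^sub>m Gb
             - (1/2) \<cdot>\<^sub>m outer (bvec n) r) $$ (k, j) = X0op n (shiftA n) (P 1) $$ (k, j)"
      unfolding lhs Gent[OF kj] using S g1 gk by (simp add: algebra_simps)
  qed (use G Gb oc in \<open>auto simp: X0op_def\<close>)
  show ?thesis unfolding X0inv_def key by (rule the_inv_into_f_f[OF X0_inj P1c, symmetric])
qed

end
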